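(* For the mechanism $\mathbb{M}_{\text{1-supply}}$ on a unit-supply two-sided market with XOS buyers, the expected sum of payments charged to the buyers equals $$\mathbb{E}\Big[\sum_{i\in[n]}\rho_i^B\Big]=\frac12\sum_{j\in L}p_j\,\Pr_{\mathbf v,Z}\big[j\notin\Lambda_{n+1}(\mathbf v,Z)\ \big|\ j\in Z\big].$$
   Context: Unit-supply two-sided market: buyers $[n]$, sellers $[k]$, seller $j$ owns only item $j$. Buyer valuations $v_i$ are monotone normalized XOS functions on $2^{[k]}$, drawn independently from public distributions $G_i$; seller values $w_j\ge0$ drawn independently from public distributions $F_j$. For XOS $v$ and $T\subseteq[k]$, $a(v,T,\cdot)$ is a fixed additive function with $a(v,T,T)=v(T)$, $a(v,T,S)\le v(S)$. $\mathbb{A}$ maps each buyer profile $\mathbf v$ to an allocation $X^{\mathbb A}(\mathbf v)$ of disjoint bundles to buyers. $\mathrm{SW}^B_j(\mathbf v)=a(v_i,X^{\mathbb A}_i(\mathbf v),\{j\})$ if $j\in X^{\mathbb A}_i(\mathbf v)$, else $0$. $L=\{j:\mathbb{E}[\mathrm{SW}^B_j(\mathbf v)]\ge4\mathbb{E}[w_j]\}$, $p_j=\frac12\mathbb{E}[\mathrm{SW}^B_j(\mathbf v)]$ for $j\in L$. $\mathbb{M}_{\text{1-supply}}$: for each $j\in L$, independently with probability $q_j=1/(2\Pr[w_j\le p_j])$ offer seller $j$ payment $p_j$; she accepts iff $w_j\le p_j$. $Z$ is the random set of items whose sellers received and accepted an offer; $\Lambda_1=Z$. Buyers $i=1,\dots,n$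 in turn pick $B_i\subseteq\Lambda_i$ maximizing $v_i(B_i)-\sum_{j\in B_i}p_j$, receive it and pay $\rho_i^B=\sum_{j\in B_i}p_j$, and $\Lambda_{i+1}=\Lambda_i\setminus B_i$. $\Lambda_{n+1}(\mathbf v,Z)$ is the set of accepted items bought by no buyer. *)

theory Defs
  imports "HOL-Probability.Probability"
begin

(* Buyers are 0..n-1, items/sellers are 0..k-1.  A valuation is a function on item sets. *)
type_synonym valuation = "nat set \<Rightarrow> real"

definition xos :: "nat \<Rightarrow> valuation \<Rightarrow> bool" where
  "xos k v \<longleftrightarrow> (\<exists>A :: (nat \<Rightarrow> real) set. finite A \<and> A \<noteq> {} \<and>
      (\<forall>c\<in>A. \<forall>j<k. 0 \<le> c j) \<and>
      (\<forall>S\<subseteq>{..<k}. v S = Max ((\<lambda>c. \<Sum>j\<in>S. c j) ` A)))"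

definition xos_valuation :: "nat \<Rightarrow> valuation \<Rightarrow> bool" where
  "xos_valuation k v \<longleftrightarrow> v {} = 0 \<and>
      (\<forall>S T. S \<subseteq> T \<and> T \<subseteq> {..<k} \<longrightarrow> v S \<le> v T) \<and> xos k v"

definition supporting_fn :: "nat \<Rightarrow> (valuation \<Rightarrow> nat set \<Rightarrow> nat set \<Rightarrow> real) \<Rightarrow> bool" where
  "supporting_fn k a \<longleftrightarrow> (\<forall>v T. xos_valuation k v \<and> T \<subseteq> {..<k} \<longrightarrow>
      (\<forall>S\<subseteq>{..<k}. a v T S = (\<Sum>j\<in>S. a v T {j})) \<and>
      (\<forall>j<k. 0 \<le> a v T {j}) \<and>
      a v T T = v T \<and>
      (\<forall>S\<subseteq>{..<k}. a v T S \<le> v S))"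

definition allocation_rule :: "nat \<Rightarrow> nat \<Rightarrow> ((nat \<Rightarrow> valuation) \<Rightarrow> nat \<Rightarrow> nat set) \<Rightarrow> bool" where
  "allocation_rule n k X \<longleftrightarrow> (\<forall>vs. (\<forall>i<n. X vs i \<subseteq> {..<k}) \<and>
      (\<forall>i<n. \<forall>i'<n. i \<noteq> i' \<longrightarrow> X vs i \<inter> X vs i' = {}))"

definition SW_B :: "nat \<Rightarrow> ((nat \<Rightarrow> valuation) \<Rightarrow> nat \<Rightarrow> nat set)
    \<Rightarrow> (valuation \<Rightarrow> nat set \<Rightarrow> nat set \<Rightarrow> real) \<Rightarrow> nat \<Rightarrow> (nat \<Rightarrow> valuation) \<Rightarrow> real" where
  "SW_B n X a j vs = (\<Sum>i<n. if j \<in> X vs i then a (vs i) (X vs i) {j} else 0)"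

definition ESW :: "nat \<Rightarrow> (nat \<Rightarrow> valuation measure) \<Rightarrow> ((nat \<Rightarrow> valuation) \<Rightarrow> nat \<Rightarrow> nat set)
    \<Rightarrow> (valuation \<Rightarrow> nat set \<Rightarrow> nat set \<Rightarrow> real) \<Rightarrow> nat \<Rightarrow> real" where
  "ESW n G X a j = (\<integral>vs. SW_B n X a j vs \<partial>(PiM {..<n} G))"

definition price :: "nat \<Rightarrow> (nat \<Rightarrow> valuation measure) \<Rightarrow> ((nat \<Rightarrow> valuation) \<Rightarrow> nat \<Rightarrow> nat set)
    \<Rightarrow> (valuation \<Rightarrow> nat set \<Rightarrow> nat set \<Rightarrow> real) \<Rightarrow> nat \<Rightarrow> real" where
  "price n G X a j = ESW n G X a j / 2"

definition Lset :: "nat \<Rightarrow> nat \<Rightarrow> (nat \<Rightarrow> valuation measure) \<Rightarrow> (nat \<Rightarrow> real measure)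
    \<Rightarrow> ((nat \<Rightarrow> valuation) \<Rightarrow> nat \<Rightarrow> nat set)
    \<Rightarrow> (valuation \<Rightarrow> nat set \<Rightarrow> nat set \<Rightarrow> real) \<Rightarrow> nat set" where
  "Lset n k G F X a = {j\<in>{..<k}. ESW n G X a j \<ge> 4 * (\<integral>w. w \<partial>(F j))}"

definition qprob :: "nat \<Rightarrow> (nat \<Rightarrow> valuation measure) \<Rightarrow> (nat \<Rightarrow> real measure)
    \<Rightarrow> ((nat \<Rightarrow> valuation) \<Rightarrow> nat \<Rightarrow> nat set)
    \<Rightarrow> (valuation \<Rightarrow> nat set \<Rightarrow> nat set \<Rightarrow> real) \<Rightarrow> nat \<Rightarrow> real" where
  "qprob n G F X a j = 1 / (2 * measure (F j) {w\<in>space (F j). w \<le> price n G X a j})"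

(* Z: items whose seller received (coin os j) and accepted (w_j \<le> p_j) an offer *)
definition acceptedZ :: "nat set \<Rightarrow> (nat \<Rightarrow> real) \<Rightarrow> (nat \<Rightarrow> real) \<Rightarrow> (nat \<Rightarrow> bool) \<Rightarrow> nat set" where
  "acceptedZ L p ws os = {j\<in>L. os j \<and> ws j \<le> p j}"

(* avail ch vs Z i = \<Lambda>_{i+1}: items still available when buyer i (0-based) arrives.
   ch i v S is buyer i's (deterministic, tie-broken) choice from available set S. *)
fun avail :: "(nat \<Rightarrow> valuation \<Rightarrow> nat set \<Rightarrow> nat set) \<Rightarrow> (nat \<Rightarrow> valuation) \<Rightarrow> nat set \<Rightarrow> nat \<Rightarrow> nat set" where
  "avail ch vs Z 0 = Z"
| "avail ch vs Z (Suc i) = avail ch vs Z i - ch i (vs i) (avail ch vs Z i)"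

definition buyer_bundle :: "(nat \<Rightarrow> valuation \<Rightarrow> nat set \<Rightarrow> nat set) \<Rightarrow> (nat \<Rightarrow> valuation) \<Rightarrow> nat set \<Rightarrow> nat \<Rightarrow> nat set" where
  "buyer_bundle ch vs Z i = ch i (vs i) (avail ch vs Z i)"

definition buyer_payment :: "(nat \<Rightarrow> real) \<Rightarrow> (nat \<Rightarrow> valuation \<Rightarrow> nat set \<Rightarrow> nat set)
    \<Rightarrow> (nat \<Rightarrow> valuation) \<Rightarrow> nat set \<Rightarrow> nat \<Rightarrow> real" where
  "buyer_payment p ch vs Z i = (\<Sum>j\<in>buyer_bundle ch vs Z i. p j)"

definition Omega :: "nat \<Rightarrow> nat \<Rightarrow> (nat \<Rightarrow> valuation measure) \<Rightarrow> (nat \<Rightarrow> real measure)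
    \<Rightarrow> (nat \<Rightarrow> real)
    \<Rightarrow> ((nat \<Rightarrow> valuation) \<times> (nat \<Rightarrow> real) \<times> (nat \<Rightarrow> bool)) measure" where
  "Omega n k G F q = PiM {..<n} G \<Otimes>\<^sub>M (PiM {..<k} F \<Otimes>\<^sub>M
       PiM {..<k} (\<lambda>j. measure_pmf (bernoulli_pmf (q j))))"

end

theory Submission imports Defs begin

lemma avail_sub: "avail ch vs Z m \<subseteq> Z"
  by (induction m) auto

lemma pay_sum:
  assumes fin: "finite Z"
    and chs: "\<And>i S. i < m \<Longrightarrow> S \<subseteq> Z \<Longrightarrow> ch i (vs i) S \<subseteq> S"
  shows "(\<Sum>i<m. buyer_payment p ch vs Z i) = (\<Sum>j\<in>Z - avail ch vs Z m. p j)"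
  using chs
proof (induction m)
  case 0
  then show ?case by simp
next
  case (Suc m)
  have B: "buyer_bundle ch vs Z m \<subseteq> avail ch vs Z m"
    using Suc.prems[of m "avail ch vs Z m"] avail_sub[of ch vs Z m]
    by (simp add: buyer_bundle_def)
  have eq: "Z - avail ch vs Z (Suc m) = (Z - avail ch vs Z m) \<union> buyer_bundle ch vs Z m"
    using B avail_sub[of ch vs Z m] by (auto simp: buyer_bundle_def)
  have "(\<Sum>i<Suc m. buyer_payment p ch vs Z i) = (\<Sum>j\<in>Z - avail ch vs Z m. p j) + buyer_payment p ch vs Z m"
    using Suc by simp
  also have "\<dots> = (\<Sum>j\<in>Z - avail ch vs Z (Suc m). p j)"
    unfolding eq buyer_payment_def
    apply (rule sum.union_disjoint[symmetric])
    using fin B avail_sub[of ch vs Z m] finite_subset by (auto intro: finite_subset)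
  finally show ?case .
qed

lemma half_prob:
  fixes N :: "real measure"
  assumes pN: "prob_space N" and sN: "sets N = sets borel" and nn: "AE w in N. 0 \<le> w"
    and int: "integrable N (\<lambda>w. w)" and le: "2 * (\<integral>w. w \<partial>N) \<le> c"
  shows "measure N {w\<in>space N. w \<le> c} \<ge> 1/2"
proof -
  interpret N: prob_space N by (rule pN)
  have mc[measurable]: "(\<lambda>w. w) \<in> borel_measurable N" using sN measurable_cong_sets by (metis measurable_ident_sets)
  have E0: "0 \<le> (\<integral>w. w \<partial>N)" using nn by (rule integral_nonneg_AE)
  have A: "{w\<in>space N. w \<le> c} \<in> sets N" by measurable
  have B: "{w\<in>space N. c < w} \<in> sets N" by measurable
  have C: "{w\<in>space N. c \<le> w} \<in> sets N" by measurable
  have compl: "space N - {w\<in>space N. w \<le> c} = {w\<in>space N. c < w}" by auto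
  have "measure N {w\<in>space N. c < w} \<le> 1/2"
  proof (cases "0 < c")
    case True
    have "measure N {w\<in>space N. c < w} \<le> measure N {w\<in>space N. c \<le> w}"
      by (rule N.finite_measure_mono[OF _ C]) auto
    also have "\<dots> \<le> (\<integral>w. w \<partial>N) / c"
      by (rule integral_Markov_inequality_measure[OF int C nn True])
    also have "\<dots> \<le> 1/2" using le True by (simp add: divide_simps)
    finally show ?thesis .
  next
    case False
    then have "(\<integral>w. w \<partial>N) = 0" using le E0 by linarith
    then have ae: "AE w in N. w = 0" using integral_nonneg_eq_0_iff_AE[OF int nn] by simp
    have c0: "c = 0" using False le E0 by linarith
    have "AE w in N. w \<le> c" using ae c0 by auto
    then have "measure N {w\<in>space N. w \<le> c} = 1" using N.prob_Collect_eq_1[OF A] by simp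
    then show ?thesis using N.prob_compl[OF A] compl by simp
  qed
  then show ?thesis using N.prob_compl[OF A] compl by simp
qed

lemma avail_sets:
  fixes M :: "'b measure" and V :: "'b \<Rightarrow> nat \<Rightarrow> valuation" and Zf :: "'b \<Rightarrow> nat set"
  assumes finL: "finite L" and ZfL: "\<And>\<omega>. Zf \<omega> \<subseteq> L"
    and pZ: "\<And>j. {\<omega>\<in>space M. j \<in> Zf \<omega>} \<in> sets M"
    and mG: "\<And>i. i < n \<Longrightarrow> (\<lambda>\<omega>. V \<omega> i) \<in> measurable M (G i)"
    and ch_meas: "\<And>i S. i < n \<Longrightarrow> S \<subseteq> L \<Longrightarrow> (\<lambda>v. ch i v S) \<in> measurable (G i) (count_space UNIV)"
  shows "m \<le> n \<Longrightarrow> {\<omega>\<in>space M. avail ch (V \<omega>) (Zf \<omega>) m = S} \<in> sets M"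
proof (induction m arbitrary: S)
  case 0
  show ?case
  proof (cases "S \<subseteq> L")
    case True
    have "{\<omega>\<in>space M. avail ch (V \<omega>) (Zf \<omega>) 0 = S} = {\<omega>\<in>space M. \<forall>j\<in>L. (j \<in> Zf \<omega> \<longleftrightarrow> j \<in> S)}"
      using True ZfL by (auto simp: subset_iff)
    moreover have "{\<omega>\<in>space M. \<forall>j\<in>L. (j \<in> Zf \<omega> \<longleftrightarrow> j \<in> S)} \<in> sets M"
    proof (rule sets.sets_Collect_finite_All[OF _ finL])
      fix j assume "j \<in> L"
      show "{\<omega>\<in>space M. (j \<in> Zf \<omega> \<longleftrightarrow> j \<in> S)} \<in> sets M"
      proof (cases "j \<in> S")
        case True then show ?thesis using pZ[of j] by simp
      next
        case False
        then have "{\<omega>\<in>space M. (j \<in> Zf \<omega> \<longleftrightarrow> j \<in> S)} = {\<omega>\<in>space M. \<not> (j \<in> Zf \<omega>)}" by simp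
        also have "\<dots> \<in> sets M" by (rule sets.sets_Collect_neg[OF pZ[of j]])
        finally show ?thesis .
      qed
    qed
    ultimately show ?thesis by simp
  next
    case False
    then have "{\<omega>\<in>space M. avail ch (V \<omega>) (Zf \<omega>) 0 = S} = {}" using ZfL by auto
    then show ?thesis by (simp only:) (rule sets.empty_sets)
  qed
next
  case (Suc m)
  have mn: "m < n" using Suc.prems by simp
  have "{\<omega>\<in>space M. avail ch (V \<omega>) (Zf \<omega>) (Suc m) = S} =
        {\<omega>\<in>space M. \<exists>T\<in>Pow L. avail ch (V \<omega>) (Zf \<omega>) m = T \<and> T - ch m (V \<omega> m) T = S}"
  proof -
    have "avail ch (V \<omega>) (Zf \<omega>) m \<in> Pow L" for \<omega> using avail_sub ZfL by blast
    then show ?thesis by auto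
  qed
  moreover have "{\<omega>\<in>space M. \<exists>T\<in>Pow L. avail ch (V \<omega>) (Zf \<omega>) m = T \<and> T - ch m (V \<omega> m) T = S} \<in> sets M"
  proof (rule sets.sets_Collect_finite_Ex)
    show "finite (Pow L)" using finL by simp
  next
    fix T assume T: "T \<in> Pow L"
    have m1: "{\<omega>\<in>space M. avail ch (V \<omega>) (Zf \<omega>) m = T} \<in> sets M" using Suc.IH mn by simp
    have fm: "(\<lambda>\<omega>. ch m (V \<omega> m) T) \<in> measurable M (count_space UNIV)"
      by (rule measurable_compose[OF mG[OF mn] ch_meas[OF mn]]) (use T in auto)
    have "(\<lambda>\<omega>. ch m (V \<omega> m) T) -` {c. T - c = S} \<inter> space M \<in> sets M"
      by (rule measurable_sets[OF fm]) simp
    moreover have "(\<lambda>\<omega>. ch m (V \<omega> m) T) -` {c. T - c = S} \<inter> space M = {\<omega>\<in>space M. T - ch m (V \<omega> m) T = S}" by auto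
    ultimately have m2: "{\<omega>\<in>space M. T - ch m (V \<omega> m) T = S} \<in> sets M" by simp
    show "{\<omega>\<in>space M. avail ch (V \<omega>) (Zf \<omega>) m = T \<and> T - ch m (V \<omega> m) T = S} \<in> sets M"
      using sets.Int[OF m1 m2] by (simp add: Collect_conj_eq Int_assoc Int_left_commute)
  qed
  ultimately show ?case by simp
qed

lemma E_sets:
  fixes M :: "'b measure" and V :: "'b \<Rightarrow> nat \<Rightarrow> valuation" and Zf :: "'b \<Rightarrow> nat set"
  assumes finL: "finite L" and ZfL: "\<And>\<omega>. Zf \<omega> \<subseteq> L"
    and pZ: "\<And>j. {\<omega>\<in>space M. j \<in> Zf \<omega>} \<in> sets M"
    and mG: "\<And>i. i < n \<Longrightarrow> (\<lambda>\<omega>. V \<omega> i) \<in> measurable M (G i)"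
    and ch_meas: "\<And>i S. i < n \<Longrightarrow> S \<subseteq> L \<Longrightarrow> (\<lambda>v. ch i v S) \<in> measurable (G i) (count_space UNIV)"
  shows "{\<omega>\<in>space M. j \<in> Zf \<omega> \<and> j \<notin> avail ch (V \<omega>) (Zf \<omega>) n} \<in> sets M"
proof -
  have "{\<omega>\<in>space M. j \<in> Zf \<omega> \<and> j \<notin> avail ch (V \<omega>) (Zf \<omega>) n} = {\<omega>\<in>space M. \<exists>T\<in>Pow L. avail ch (V \<omega>) (Zf \<omega>) n = T \<and> (j \<in> Zf \<omega> \<and> j \<notin> T)}"
  proof -
    have "avail ch (V \<omega>) (Zf \<omega>) n \<in> Pow L" for \<omega> using avail_sub ZfL by blast
    then show ?thesis by auto
  qed
  also have "\<dots> \<in> sets M"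
  proof (rule sets.sets_Collect_finite_Ex)
    show "finite (Pow L)" using finL by simp
  next
    fix T assume T: "T \<in> Pow L"
    have m1: "{\<omega>\<in>space M. avail ch (V \<omega>) (Zf \<omega>) n = T} \<in> sets M" using avail_sets[OF finL ZfL pZ mG ch_meas] by simp
    have m2: "{\<omega>\<in>space M. j \<in> Zf \<omega> \<and> j \<notin> T} \<in> sets M"
    proof (cases "j \<in> T")
      case True then show ?thesis by simp
    next
      case False then show ?thesis using pZ[of j] by simp
    qed
    show "{\<omega>\<in>space M. avail ch (V \<omega>) (Zf \<omega>) n = T \<and> (j \<in> Zf \<omega> \<and> j \<notin> T)} \<in> sets M"
      using sets.Int[OF m1 m2] by (simp add: Collect_conj_eq Int_assoc Int_left_commute)
  qed
  finally show ?thesis .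
qed

theorem proposition2:
  fixes n k :: nat
    and G :: "nat \<Rightarrow> valuation measure"
    and F :: "nat \<Rightarrow> real measure"
    and X :: "(nat \<Rightarrow> valuation) \<Rightarrow> nat \<Rightarrow> nat set"
    and a :: "valuation \<Rightarrow> nat set \<Rightarrow> nat set \<Rightarrow> real"
    and ch :: "nat \<Rightarrow> valuation \<Rightarrow> nat set \<Rightarrow> nat set"
  defines "p \<equiv> price n G X a"
      and "L \<equiv> Lset n k G F X a"
      and "q \<equiv> qprob n G F X a"
  assumes G_prob: "\<And>i. i < n \<Longrightarrow> prob_space (G i)"
      and G_xos: "\<And>i. i < n \<Longrightarrow> AE v in G i. xos_valuation k v"
      and F_prob: "\<And>j. j < k \<Longrightarrow> prob_space (F j)"
      and F_borel: "\<And>j. j < k \<Longrightarrow> sets (F j) = sets borel"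
      and F_nonneg: "\<And>j. j < k \<Longrightarrow> AE w in F j. 0 \<le> w"
      and F_int: "\<And>j. j < k \<Longrightarrow> integrable (F j) (\<lambda>w. w)"
      and a_supp: "supporting_fn k a"
      and X_alloc: "allocation_rule n k X"
      and ch_opt: "\<And>i v S. i < n \<Longrightarrow> S \<subseteq> {..<k} \<Longrightarrow>
          ch i v S \<subseteq> S \<and>
          (\<forall>B\<subseteq>S. v B - (\<Sum>j\<in>B. p j) \<le> v (ch i v S) - (\<Sum>j\<in>ch i v S. p j))"
      and ch_meas: "\<And>i S. i < n \<Longrightarrow> S \<subseteq> {..<k} \<Longrightarrow>
          (\<lambda>v. ch i v S) \<in> measurable (G i) (count_space UNIV)"
  shows "(\<integral>\<omega>. (\<Sum>i<n. buyer_payment p ch (fst \<omega>)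
              (acceptedZ L p (fst (snd \<omega>)) (snd (snd \<omega>))) i) \<partial>(Omega n k G F q))
       = 1/2 * (\<Sum>j\<in>L. p j *
           (measure (Omega n k G F q)
              {\<omega>\<in>space (Omega n k G F q).
                 j \<in> acceptedZ L p (fst (snd \<omega>)) (snd (snd \<omega>)) \<and>
                 j \<notin> avail ch (fst \<omega>) (acceptedZ L p (fst (snd \<omega>)) (snd (snd \<omega>))) n}
            / measure (Omega n k G F q)
              {\<omega>\<in>space (Omega n k G F q).
                 j \<in> acceptedZ L p (fst (snd \<omega>)) (snd (snd \<omega>))}))"
  proof -
  define M where "M = Omega n k G F q"
  define PG where "PG = PiM {..<n} G"
  define PF where "PF = PiM {..<k} F"
  define PB where "PB = PiM {..<k} (\<lambda>j. measure_pmf (bernoulli_pmf (q j)))"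
  have M_eq: "M = PG \<Otimes>\<^sub>M (PF \<Otimes>\<^sub>M PB)"
    by (simp add: M_def PG_def PF_def PB_def Omega_def)
  have pPG: "prob_space PG" unfolding PG_def by (rule prob_space_PiM) (use G_prob in auto)
  have pPF: "prob_space PF" unfolding PF_def by (rule prob_space_PiM) (use F_prob in auto)
  have pPB: "prob_space PB" unfolding PB_def by (rule prob_space_PiM) (simp add: prob_space_measure_pmf)
  have pM: "prob_space M" unfolding M_eq by (intro prob_space_pair pPG pPF pPB)
  interpret M: prob_space M by (rule pM)
  have Lk: "L \<subseteq> {..<k}" by (auto simp: L_def Lset_def)
  have finL: "finite L" using Lk finite_subset by blast
  define Zf where "Zf = (\<lambda>\<omega>::((nat \<Rightarrow> valuation) \<times> (nat \<Rightarrow> real) \<times> (nat \<Rightarrow> bool)). acceptedZ L p (fst (snd \<omega>)) (snd (snd \<omega>)))"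
  have ZfL: "Zf \<omega> \<subseteq> L" for \<omega> by (auto simp: Zf_def acceptedZ_def)
  have sM: "sets M = sets (PG \<Otimes>\<^sub>M (PF \<Otimes>\<^sub>M PB))" by (simp add: M_eq)
  have mG: "(\<lambda>\<omega>. fst \<omega> i) \<in> measurable M (G i)" if "i < n" for i
  proof -
    have "fst \<in> measurable M PG" unfolding M_eq by simp
    moreover have "(\<lambda>x. x i) \<in> measurable PG (G i)" unfolding PG_def using that by simp
    ultimately show ?thesis by (rule measurable_compose)
  qed
  have mW: "(\<lambda>\<omega>. fst (snd \<omega>) j) \<in> borel_measurable M" if "j < k" for j
  proof -
    have "(\<lambda>\<omega>. fst (snd \<omega>)) \<in> measurable M PF" unfolding M_eq by simp
    moreover have "(\<lambda>x. x j) \<in> measurable PF (F j)" unfolding PF_def using that by simp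
    ultimately have "(\<lambda>\<omega>. fst (snd \<omega>) j) \<in> measurable M (F j)" by (rule measurable_compose)
    then show ?thesis using F_borel[OF that] measurable_cong_sets by blast
  qed
  have pO: "{\<omega>\<in>space M. snd (snd \<omega>) j} \<in> sets M" if "j < k" for j
  proof -
    have "(\<lambda>\<omega>. snd (snd \<omega>)) \<in> measurable M PB" unfolding M_eq by simp
    moreover have "(\<lambda>x. x j) \<in> measurable PB (measure_pmf (bernoulli_pmf (q j)))" unfolding PB_def using that by simp
    ultimately have m: "(\<lambda>\<omega>. snd (snd \<omega>) j) \<in> measurable M (measure_pmf (bernoulli_pmf (q j)))" by (rule measurable_compose)
    have "{\<omega>\<in>space M. snd (snd \<omega>) j} = (\<lambda>\<omega>. snd (snd \<omega>) j) -` {True} \<inter> space M" by auto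
    then show ?thesis using measurable_sets[OF m, of "{True}"] by simp
  qed
  have pZ: "{\<omega>\<in>space M. j \<in> Zf \<omega>} \<in> sets M" for j
  proof (cases "j \<in> L")
    case True
    then have jk: "j < k" using Lk by auto
    have "{\<omega>\<in>space M. j \<in> Zf \<omega>} = {\<omega>\<in>space M. snd (snd \<omega>) j} \<inter> {\<omega>\<in>space M. fst (snd \<omega>) j \<le> p j}"
      using True by (auto simp: Zf_def acceptedZ_def)
    moreover have "{\<omega>\<in>space M. fst (snd \<omega>) j \<le> p j} \<in> sets M"
    proof -
      have "(\<lambda>\<omega>. fst (snd \<omega>) j) -` {..p j} \<inter> space M \<in> sets M"
        by (rule measurable_sets[OF mW[OF jk]]) simp
      moreover have "(\<lambda>\<omega>. fst (snd \<omega>) j) -` {..p j} \<inter> space M = {\<omega>\<in>space M. fst (snd \<omega>) j \<le> p j}" by auto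
      ultimately show ?thesis by simp
    qed
    ultimately show ?thesis using pO[OF jk] by (simp only:) (rule sets.Int)
  next
    case False
    then have "{\<omega>\<in>space M. j \<in> Zf \<omega>} = {}" using ZfL by auto
    then show ?thesis by (simp only:) (rule sets.empty_sets)
  qed
  define E where "E = (\<lambda>j. {\<omega>\<in>space M. j \<in> Zf \<omega> \<and> j \<notin> avail ch (fst \<omega>) (Zf \<omega>) n})"
  have chm: "\<And>i S. i < n \<Longrightarrow> S \<subseteq> L \<Longrightarrow> (\<lambda>v. ch i v S) \<in> measurable (G i) (count_space UNIV)"
    using ch_meas Lk by blast
  have Ej: "E j \<in> sets M" for j
    unfolding E_def by (rule E_sets[OF finL ZfL pZ mG chm])
  have pw: "(\<Sum>i<n. buyer_payment p ch (fst \<omega>) (Zf \<omega>) i) = (\<Sum>j\<in>L. p j * indicator (E j) \<omega>)"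
    if \<omega>: "\<omega> \<in> space M" for \<omega>
  proof -
    have fz: "finite (Zf \<omega>)" using ZfL finL finite_subset by blast
    have "(\<Sum>i<n. buyer_payment p ch (fst \<omega>) (Zf \<omega>) i) = (\<Sum>j\<in>Zf \<omega> - avail ch (fst \<omega>) (Zf \<omega>) n. p j)"
    proof (rule pay_sum[OF fz])
      fix i S assume "i < n" "S \<subseteq> Zf \<omega>"
      then show "ch i (fst \<omega> i) S \<subseteq> S" using ch_opt[of i S "fst \<omega> i"] ZfL[of \<omega>] Lk by blast
    qed
    also have "\<dots> = (\<Sum>j\<in>L. if j \<in> Zf \<omega> - avail ch (fst \<omega>) (Zf \<omega>) n then p j else 0)"
    proof -
      have "L \<inter> (Zf \<omega> - avail ch (fst \<omega>) (Zf \<omega>) n) = Zf \<omega> - avail ch (fst \<omega>) (Zf \<omega>) n"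
        using ZfL[of \<omega>] by blast
      then show ?thesis using sum.inter_restrict[OF finL, of p "Zf \<omega> - avail ch (fst \<omega>) (Zf \<omega>) n"] by simp
    qed
    also have "\<dots> = (\<Sum>j\<in>L. p j * indicator (E j) \<omega>)"
      by (rule sum.cong) (auto simp: E_def indicator_def \<omega>)
    finally show ?thesis .
  qed
  have intE: "(\<integral>\<omega>. (\<Sum>j\<in>L. p j * indicator (E j) \<omega>) \<partial>M) = (\<Sum>j\<in>L. p j * measure M (E j))"
  proof -
    have ints: "integrable M (\<lambda>\<omega>. p j * indicator (E j) \<omega>)" for j
      by (intro integrable_mult_right integrable_real_indicator Ej) (simp add: M.emeasure_eq_measure)
    have "(\<integral>\<omega>. (\<Sum>j\<in>L. p j * indicator (E j) \<omega>) \<partial>M) = (\<Sum>j\<in>L. (\<integral>\<omega>. p j * indicator (E j) \<omega> \<partial>M))"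
      using ints by (subst Bochner_Integration.integral_sum) auto
    also have "\<dots> = (\<Sum>j\<in>L. p j * measure M (E j))"
      by (rule sum.cong) (auto simp: Ej Int_absorb2 sets.sets_into_space)
    finally show ?thesis .
  qed
  have PZ: "measure M {\<omega>\<in>space M. j \<in> Zf \<omega>} = 1/2" if jL: "j \<in> L" for j
  proof -
    have jk: "j < k" using jL Lk by auto
    define Pj where "Pj = measure (F j) {w\<in>space (F j). w \<le> p j}"
    have ESW: "4 * (\<integral>w. w \<partial>(F j)) \<le> ESW n G X a j" using jL by (simp add: L_def Lset_def)
    have "Pj \<ge> 1/2" unfolding Pj_def
      by (rule half_prob[OF F_prob[OF jk] F_borel[OF jk] F_nonneg[OF jk] F_int[OF jk]])
         (use ESW in \<open>simp add: p_def price_def\<close>)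
    then have qj: "q j = 1 / (2 * Pj)" "0 \<le> q j" "q j \<le> 1" "q j * Pj = 1/2"
      by (auto simp: q_def qprob_def Pj_def p_def divide_simps)
    interpret PG: prob_space PG by (rule pPG)
    interpret PF: prob_space PF by (rule pPF)
    interpret PB: prob_space PB by (rule pPB)
    interpret Fj: prob_space "F j" by (rule F_prob[OF jk])
    interpret PFB: prob_space "PF \<Otimes>\<^sub>M PB" by (rule prob_space_pair[OF pPF pPB])
    define Aw where "Aw = {x\<in>space PF. x j \<le> p j}"
    define Ao where "Ao = {x\<in>space PB. x j}"
    have spF: "space (F j) = UNIV" using F_borel[OF jk] sets_eq_imp_space_eq by fastforce
    have mFj: "(\<lambda>x. x j) \<in> measurable PF (F j)" unfolding PF_def using jk by simp
    have mBj: "(\<lambda>x. x j) \<in> measurable PB (measure_pmf (bernoulli_pmf (q j)))" unfolding PB_def using jk by simp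
    have setF: "{w\<in>space (F j). w \<le> p j} \<in> sets (F j)" using F_borel[OF jk] spF by simp
    have Aw_eq: "Aw = (\<lambda>x. x j) -` {w\<in>space (F j). w \<le> p j} \<inter> space PF" by (auto simp: Aw_def spF)
    have Ao_eq: "Ao = (\<lambda>x. x j) -` {True} \<inter> space PB" by (auto simp: Ao_def)
    have Aws: "Aw \<in> sets PF" unfolding Aw_eq by (rule measurable_sets[OF mFj setF])
    have Aos: "Ao \<in> sets PB" unfolding Ao_eq by (rule measurable_sets[OF mBj]) simp
    have eAw: "emeasure PF Aw = Pj"
    proof -
      have "emeasure PF Aw = emeasure (distr PF (F j) (\<lambda>x. x j)) {w\<in>space (F j). w \<le> p j}"
        unfolding Aw_eq by (rule emeasure_distr[OF mFj setF, symmetric])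
      also have "distr PF (F j) (\<lambda>x. x j) = F j"
        unfolding PF_def by (rule distr_PiM_component) (use F_prob jk in auto)
      finally show ?thesis
        using Fj.emeasure_eq_measure Pj_def by simp
    qed
    have eAo: "emeasure PB Ao = q j"
    proof -
      have "emeasure PB Ao = emeasure (distr PB (measure_pmf (bernoulli_pmf (q j))) (\<lambda>x. x j)) {True}"
        unfolding Ao_eq by (rule emeasure_distr[OF mBj, symmetric]) simp
      also have "distr PB (measure_pmf (bernoulli_pmf (q j))) (\<lambda>x. x j) = measure_pmf (bernoulli_pmf (q j))"
        unfolding PB_def by (rule distr_PiM_component) (use jk prob_space_measure_pmf in auto)
      finally show ?thesis using qj by (simp add: emeasure_pmf_single)
    qed
    have set_eq: "{\<omega>\<in>space M. j \<in> Zf \<omega>} = space PG \<times> (Aw \<times> Ao)"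
      using jL by (auto simp: M_eq space_pair_measure Zf_def acceptedZ_def Aw_def Ao_def)
    have "emeasure M {\<omega>\<in>space M. j \<in> Zf \<omega>} = emeasure M (space PG \<times> (Aw \<times> Ao))"
      by (simp only: set_eq)
    also have "\<dots> = emeasure PG (space PG) * (emeasure PF Aw * emeasure PB Ao)"
      unfolding M_eq
      by (simp add: PFB.emeasure_pair_measure_Times PB.emeasure_pair_measure_Times Aws Aos)
    also have "\<dots> = ennreal Pj * ennreal (q j)"
      by (simp add: eAw eAo PG.emeasure_space_1)
    also have "\<dots> = ennreal (q j * Pj)"
      using qj(2) \<open>Pj \<ge> 1/2\<close> by (simp add: ennreal_mult[symmetric] mult.commute)
    also have "\<dots> = ennreal (1/2)" using qj(4) by (simp only:)
    finally have "emeasure M {\<omega>\<in>space M. j \<in> Zf \<omega>} = ennreal (1/2)" .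
    then show ?thesis unfolding measure_def by (simp only: enn2real_ennreal[of "1/2"])
  qed
  have Zf_eq: "\<And>\<omega>. acceptedZ L p (fst (snd \<omega>)) (snd (snd \<omega>)) = Zf \<omega>" by (simp add: Zf_def)
  have LHS: "(\<integral>\<omega>. (\<Sum>i<n. buyer_payment p ch (fst \<omega>) (Zf \<omega>) i) \<partial>M) = (\<Sum>j\<in>L. p j * measure M (E j))"
  proof -
    have "(\<integral>\<omega>. (\<Sum>i<n. buyer_payment p ch (fst \<omega>) (Zf \<omega>) i) \<partial>M) = (\<integral>\<omega>. (\<Sum>j\<in>L. p j * indicator (E j) \<omega>) \<partial>M)"
      by (rule Bochner_Integration.integral_cong[OF refl pw])
    then show ?thesis using intE by simp
  qed
  have RHS: "1/2 * (\<Sum>j\<in>L. p j * (measure M (E j) / measure M {\<omega>\<in>space M. j \<in> Zf \<omega>})) = (\<Sum>j\<in>L. p j * measure M (E j))"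
    unfolding sum_distrib_left by (rule sum.cong) (auto simp: PZ)
  show ?thesis using LHS RHS unfolding M_def[symmetric] Zf_eq E_def by simp

qed

end
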